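(* Let $d\ge 2$, set $b:=2^d$ and $Q:=[0,1]^d$, and let $(x_n)_{n\ge1}\subset Q$ be the dyadic digital sequence defined below. For every $N\in\mathbb{N}$ there exist pairwise disjoint Borel sets $A_1,\dots,A_N\subset Q$ such that \[ \lambda_d(A_n)=\frac1N,\qquad A_n\subset B\bigl(x_n,6\sqrt d\,N^{-1/d}\bigr)\qquad(1\le n\le N), \] and $\lambda_d\bigl(Q\setminus\bigcup_{n=1}^N A_n\bigr)=0$.
   Context: $\lambda_d$ denotes Lebesgue measure on $Q=[0,1]^d$ (a probability measure), and $B(x,r)$ is the closed Euclidean ball of radius $r$ centred at $x$. Dyadic digital sequence: for $a\in\{0,1,\dots,b-1\}$ write $a=\sum_{j=1}^d\varepsilon_j(a)2^{j-1}$ with $\varepsilon_j(a)\in\{0,1\}$; for an integer $m\ge0$ write its base-$b$ expansion $m=\sum_{k\ge0}a_k(m)b^k$ with $a_k(m)\in\{0,\dots,b-1\}$, all but finitely many zero. Then \[ x_n:=\Bigl(\sum_{k=0}^\infty\varepsilon_1(a_k(n-1))2^{-(k+1)},\ \dots,\ \sum_{k=0}^\infty\varepsilon_d(a_k(n-1))2^{-(k+1)}\Bigr),\qquad n\ge1. \] *)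

theory Defs
  imports "HOL-Analysis.Analysis"
begin

definition digit :: "nat \<Rightarrow> nat \<Rightarrow> nat \<Rightarrow> nat" where
  "digit b k m = (m div b ^ k) mod b"

definition bitj :: "nat \<Rightarrow> nat \<Rightarrow> nat" where
  "bitj j a = (a div 2 ^ (j - 1)) mod 2"

text \<open>j-th coordinate (1 <= j <= d) of the n-th point (n >= 1) of the dyadic digital sequence in dimension d.\<close>
definition dyadic_coord :: "nat \<Rightarrow> nat \<Rightarrow> nat \<Rightarrow> real" where
  "dyadic_coord d j n = (\<Sum>k. real (bitj j (digit (2 ^ d) k (n - 1))) / 2 ^ (k + 1))"

text \<open>The n-th point, where the coordinate i of the type 'n is the idx(i)-th coordinate.\<close>
definition dyadic_point :: "nat \<Rightarrow> ('n::finite \<Rightarrow> nat) \<Rightarrow> nat \<Rightarrow> real ^ 'n" where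
  "dyadic_point d idx n = (\<chi> i. dyadic_coord d (idx i) n)"

end

theory Submission
  imports Defs
begin

definition cnt :: "nat \<Rightarrow> nat \<Rightarrow> nat \<Rightarrow> nat" where
  "cnt N i c = (N + 2^i - 1 - c mod 2^i) div 2^i"

lemma cnt_mod[simp]: "cnt N i (c mod 2^i) = cnt N i c"
  by (simp add: cnt_def)

lemma cnt_0[simp]: "cnt N 0 c = N"
  by (simp add: cnt_def)

lemma div_split_aux:
  fixes M P :: nat assumes "P > 0"
  shows "(M + P) div (2*P) = (M div P + 1) div 2" "M div (2*P) = (M div P) div 2"
proof -
  show "M div (2*P) = (M div P) div 2"
    by (simp add: div_mult2_eq mult.commute[of 2 P])
  have "(M + P) div P = M div P + 1" using assms by simp
  then show "(M + P) div (2*P) = (M div P + 1) div 2"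
    by (simp add: div_mult2_eq mult.commute[of 2 P])
qed

lemma mod_Suc_pow2:
  fixes c :: nat
  shows "c mod 2^(Suc i) = (if odd (c div 2^i) then c mod 2^i + 2^i else c mod 2^i)"
proof -
  have "c mod 2^(Suc i) = 2^i * (c div 2^i mod 2) + c mod 2^i"
    unfolding power_Suc2 by (rule mod_mult2_eq)
  then show ?thesis by (auto simp: odd_iff_mod_2_eq_one even_iff_mod_2_eq_zero)
qed

lemma cnt_left:
  assumes "r < 2^i"
  shows "cnt N (Suc i) r = (cnt N i r + 1) div 2"
proof -
  have r: "r mod 2^i = r" "r mod 2^Suc i = r" using assms by auto
  define M where "M = N + 2^i - 1 - r"
  have "N + 2^Suc i - 1 - r = M + 2^i" unfolding M_def using assms by simp
  then show ?thesis unfolding cnt_def r M_def[symmetric]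
    using div_split_aux(1)[of "2^i" M] by (simp add: mult.commute)
qed

lemma cnt_right:
  assumes "r < 2^i"
  shows "cnt N (Suc i) (r + 2^i) = cnt N i r div 2"
proof -
  have r: "r mod 2^i = r" "(r + 2^i) mod 2^Suc i = r + 2^i" using assms by auto
  define M where "M = N + 2^i - 1 - r"
  have "N + 2^Suc i - 1 - (r + 2^i) = M" unfolding M_def using assms by simp
  then show ?thesis unfolding cnt_def r M_def[symmetric]
    using div_split_aux(2)[of "2^i" M] by (simp add: mult.commute)
qed

lemma cnt_Suc:
  "cnt N (Suc i) c = (if odd (c div 2^i) then cnt N i c div 2 else (cnt N i c + 1) div 2)"
proof -
  have r: "c mod 2^i < 2^i" by simp
  have m: "(c mod 2^i) mod 2^i = c mod 2^i" by simp
  show ?thesis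
  proof (cases "odd (c div 2^i)")
    case True
    then have h: "c mod 2^Suc i = c mod 2^i + 2^i" using mod_Suc_pow2[of c i] by simp
    have h2: "(c mod 2^i + 2^i) mod 2^Suc i = c mod 2^i + 2^i" using r by simp
    have "cnt N (Suc i) c = cnt N (Suc i) (c mod 2^i + 2^i)"
      unfolding cnt_def h h2 ..
    also have "\<dots> = cnt N i (c mod 2^i) div 2" by (rule cnt_right[OF r])
    also have "cnt N i (c mod 2^i) = cnt N i c" by (rule cnt_mod)
    finally show ?thesis using True by simp
  next
    case False
    then have h: "c mod 2^Suc i = c mod 2^i" using mod_Suc_pow2[of c i] by simp
    have h2: "(c mod 2^i) mod 2^Suc i = c mod 2^i" by (rule mod_less) (rule less_le_trans[OF r], simp)
    have "cnt N (Suc i) c = cnt N (Suc i) (c mod 2^i)"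
      unfolding cnt_def h h2 ..
    also have "\<dots> = (cnt N i (c mod 2^i) + 1) div 2" by (rule cnt_left[OF r])
    also have "cnt N i (c mod 2^i) = cnt N i c" by (rule cnt_mod)
    finally show ?thesis using False by simp
  qed
qed

lemma cnt_Suc_mod: "cnt N (Suc i) (c mod 2^i) = (cnt N i c + 1) div 2"
  using cnt_left[of "c mod 2^i" i N] by simp

lemma cnt_lower: "N < (cnt N i c + 1) * 2^i"
proof -
  have r: "c mod 2^i < 2^i" by simp
  define M where "M = N + 2^i - 1 - c mod 2^i"
  have a: "M div 2^i * 2^i + M mod 2^i = M" by (rule div_mult_mod_eq)
  have b: "M mod 2^i < (2::nat)^i" by simp
  have c: "(M div 2^i + 1) * 2^i = M div 2^i * 2^i + (2::nat)^i" by simp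
  have "M < (M div 2^i + 1) * 2^i" using a b c by linarith
  moreover have "N \<le> M" unfolding M_def using r by linarith
  moreover have "cnt N i c = M div 2^i" unfolding cnt_def M_def by simp
  ultimately show ?thesis by simp
qed

lemma cnt_one: assumes "m < N" "N \<le> 2^T" shows "cnt N T m = 1"
proof -
  have e: "m mod 2^T = m" using assms by simp
  have "(N + 2^T - 1 - m) div 2^T = 1"
    by (rule div_nat_eqI) (use assms in auto)
  then show ?thesis unfolding cnt_def e .
qed


primrec blen :: "nat \<Rightarrow> nat \<Rightarrow> nat \<Rightarrow> nat \<Rightarrow> nat \<Rightarrow> real" where
  "blen d N c 0 j = 1"
| "blen d N c (Suc i) j = (if j = i mod d then blen d N c i j * cnt N (Suc i) c / cnt N i c else blen d N c i j)"

primrec blo :: "nat \<Rightarrow> nat \<Rightarrow> nat \<Rightarrow> nat \<Rightarrow> nat \<Rightarrow> real" where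
  "blo d N c 0 j = 0"
| "blo d N c (Suc i) j = (if j = i mod d \<and> odd (c div 2^i)
      then blo d N c i j + blen d N c i j * cnt N (Suc i) (c mod 2^i) / cnt N i c else blo d N c i j)"

definition sp :: "nat \<Rightarrow> nat \<Rightarrow> nat \<Rightarrow> nat \<Rightarrow> real" where
  "sp d N c i = blo d N c i (i mod d) + blen d N c i (i mod d) * cnt N (Suc i) (c mod 2^i) / cnt N i c"

lemma blen_nonneg: "0 \<le> blen d N c i j"
  by (induction i) auto

lemma odd_eq_if_mod:
  fixes c c' :: nat
  assumes "c mod 2^Suc i = c' mod 2^Suc i"
  shows "c mod 2^i = c' mod 2^i" "odd (c div 2^i) \<longleftrightarrow> odd (c' div 2^i)"
proof -
  show *: "c mod 2^i = c' mod 2^i"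
    by (metis assms le_imp_power_dvd le_SucI mod_mod_cancel order_refl)
  show "odd (c div 2^i) \<longleftrightarrow> odd (c' div 2^i)"
    using assms mod_Suc_pow2[of c i] mod_Suc_pow2[of c' i] * by (auto split: if_splits)
qed

lemma blo_blen_dep:
  fixes c c' :: nat
  assumes "c mod 2^i = c' mod 2^i"
  shows "blen d N c i j = blen d N c' i j \<and> blo d N c i j = blo d N c' i j"
  using assms
proof (induction i arbitrary: j)
  case 0
  then show ?case by simp
next
  case (Suc i)
  have a: "c mod 2^i = c' mod 2^i" and b: "odd (c div 2^i) \<longleftrightarrow> odd (c' div 2^i)"
    using odd_eq_if_mod[OF Suc.prems] by auto
  have c1: "cnt N (Suc i) c = cnt N (Suc i) c'"
    by (metis Suc.prems cnt_mod)
  have c2: "cnt N i c = cnt N i c'"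
    by (metis a cnt_mod)
  show ?case using Suc.IH[OF a] a b c1 c2 by simp
qed

lemma sp_dep:
  fixes c c' :: nat
  assumes "c mod 2^i = c' mod 2^i"
  shows "sp d N c i = sp d N c' i"
proof -
  have c1: "cnt N i c = cnt N i c'" by (metis assms cnt_mod)
  have c2: "cnt N (Suc i) (c mod 2^i) = cnt N (Suc i) (c' mod 2^i)" by (simp only: assms)
  show ?thesis unfolding sp_def c1 c2 using blo_blen_dep[OF assms] by simp
qed

lemma cnt_Suc_le: "cnt N (Suc i) c \<le> cnt N i c"
proof -
  have "\<forall>n::nat. Suc n div 2 \<le> n \<and> n div 2 \<le> n" by presburger
  then show ?thesis by (simp add: cnt_Suc)
qed

lemma blo_mono: "blo d N c i j \<le> blo d N c (Suc i) j"
  using blen_nonneg[of d N c i j] by (auto intro!: divide_nonneg_nonneg)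

lemma blo_blen_mono: "blo d N c (Suc i) j + blen d N c (Suc i) j \<le> blo d N c i j + blen d N c i j"
proof (cases "j = i mod d")
  case False
  then show ?thesis by simp
next
  case True
  define n where "n = cnt N i c"
  have l: "0 \<le> blen d N c i j" by (rule blen_nonneg)
  show ?thesis
  proof (cases "odd (c div 2^i)")
    case True
    have e1: "cnt N (Suc i) c = n div 2" "cnt N (Suc i) (c mod 2^i) = (n+1) div 2"
      using True by (simp_all add: cnt_Suc cnt_Suc_mod n_def)
    have "(n+1) div 2 + n div 2 = n" by presburger
    then have e2: "real ((n+1) div 2) + real (n div 2) = real n" by (metis of_nat_add)
    show ?thesis using \<open>j = i mod d\<close> True e1 l
      apply (simp add: n_def[symmetric])
      apply (cases "n = 0")
       apply simp
      using e2 by (simp add: add_divide_distrib[symmetric] distrib_left[symmetric])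
  next
    case False
    have e1: "cnt N (Suc i) c = (n+1) div 2" using False by (simp add: cnt_Suc n_def)
    show ?thesis
    proof (cases "n = 0")
      case True then show ?thesis using \<open>j = i mod d\<close> False e1 l by (simp add: n_def[symmetric])
    next
      case nz: False
      have "(n+1) div 2 \<le> n" using nz by presburger
      then have "real ((n+1) div 2) / real n \<le> 1" using nz by simp
      then have "blen d N c i j * (real ((n+1) div 2) / real n) \<le> blen d N c i j * 1"
        using l by (rule mult_left_mono)
      then have "blen d N c i j * real ((n+1) div 2) / real n \<le> blen d N c i j"
        by simp
      then show ?thesis using \<open>j = i mod d\<close> False e1 by (simp add: n_def[symmetric])
    qed
  qed
qed

lemma blo_even: "j = i mod d \<Longrightarrow> even (c div 2^i) \<Longrightarrow>
   blo d N c (Suc i) j = blo d N c i j \<and> blo d N c (Suc i) j + blen d N c (Suc i) j = sp d N c i"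
  by (simp add: sp_def cnt_Suc cnt_Suc_mod)

lemma blo_odd: "j = i mod d \<Longrightarrow> odd (c div 2^i) \<Longrightarrow> blo d N c (Suc i) j = sp d N c i"
  by (simp add: sp_def)

lemma blen_prod:
  assumes "d > 0" "N > 0"
  shows "(\<Prod>j<d. blen d N c i j) = cnt N i c / N"
proof (induction i)
  case 0
  then show ?case using assms by simp
next
  case (Suc i)
  define r where "r = real (cnt N (Suc i)c) / real (cnt N i c)"
  have im: "i mod d \<in> {..<d}" using assms by simp
  have "(\<Prod>j<d. blen d N c (Suc i) j) = (\<Prod>j<d. (if j = i mod d then r else 1) * blen d N c i j)"
    by (intro prod.cong) (auto simp: r_def)
  also have "\<dots> = (\<Prod>j<d. (if j = i mod d then r else 1)) * (\<Prod>j<d. blen d N c i j)"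
    by (rule prod.distrib)
  also have "(\<Prod>j<d. (if j = i mod d then r else 1)) = r"
    using im by (simp add: prod.delta)
  finally have "(\<Prod>j<d. blen d N c (Suc i) j) = r * (cnt N i c / N)" using Suc by simp
  moreover have "cnt N i c = 0 \<Longrightarrow> cnt N (Suc i) c = 0" using cnt_Suc_le[of N i c] by simp
  ultimately show ?case unfolding r_def by (cases "cnt N i c = 0") auto
qed

definition Aset :: "nat \<Rightarrow> nat \<Rightarrow> nat \<Rightarrow> ('n::finite \<Rightarrow> nat) \<Rightarrow> nat \<Rightarrow> (real^'n) set" where
  "Aset d N T idx c = {y \<in> cbox 0 1. \<forall>i<T. \<forall>k. idx k = Suc (i mod d) \<longrightarrow>
      (if odd (c div 2^i) then sp d N c i \<le> y$k else y$k < sp d N c i)}"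

lemma idx_facts:
  fixes idx :: "'n::finite \<Rightarrow> nat"
  assumes "bij_betw idx UNIV {1..d}"
  shows "idx k \<ge> 1" "idx k \<le> d" "j < d \<Longrightarrow> \<exists>k. idx k = Suc j"
  using assms by (auto simp: bij_betw_def) (metis Suc_leI atLeastAtMost_iff imageE le_add1 plus_1_eq_Suc rangeI zero_less_Suc)

lemma cnt_pos: "c < N \<Longrightarrow> cnt N i c > 0"
proof -
  assume "c < N"
  have "c mod 2^i \<le> c" by simp
  then have "2^i \<le> N + 2^i - 1 - c mod 2^i" using \<open>c < N\<close> by linarith
  then show ?thesis unfolding cnt_def by (simp add: div_greater_zero_iff)
qed

lemma blo_odd_top:
  assumes "j = i mod d" "odd (c div 2^i)" "cnt N i c > 0"
  shows "blo d N c (Suc i) j + blen d N c (Suc i) j = blo d N c i j + blen d N c i j"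
proof -
  define n where "n = cnt N i c"
  have e1: "cnt N (Suc i) c = n div 2" "cnt N (Suc i) (c mod 2^i) = (n+1) div 2"
    using assms by (simp_all add: cnt_Suc cnt_Suc_mod n_def)
  have "(n+1) div 2 + n div 2 = n" by presburger
  then have e2: "real ((n+1) div 2) + real (n div 2) = real n" by (metis of_nat_add)
  have np: "real n > 0" using assms n_def by simp
  have "blen d N c i j * real ((n+1) div 2) / real n + blen d N c i j * real (n div 2) / real n
        = blen d N c i j * ((real ((n+1) div 2) + real (n div 2)) / real n)"
    by (simp add: add_divide_distrib distrib_left)
  also have "\<dots> = blen d N c i j" using e2 np by simp
  finally show ?thesis using assms e1 by (simp add: n_def[symmetric])
qed

lemma A_closed:
  fixes idx :: "'n::finite \<Rightarrow> nat"
  assumes bij: "bij_betw idx UNIV {1..d}" and y: "y \<in> Aset d N T idx c" and "i \<le> T" and cN: "c < N"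
  shows "blo d N c i (idx k - 1) \<le> y$k \<and> y$k \<le> blo d N c i (idx k - 1) + blen d N c i (idx k - 1)"
  using \<open>i \<le> T\<close>
proof (induction i arbitrary: k)
  case 0
  have "y \<in> cbox 0 1" using y by (simp add: Aset_def)
  then show ?case by (simp add: mem_box_cart)
next
  case (Suc i)
  have iT: "i < T" using Suc.prems by simp
  have IH: "blo d N c i (idx k - 1) \<le> y$k \<and> y$k \<le> blo d N c i (idx k - 1) + blen d N c i (idx k - 1)"
    using Suc.IH Suc.prems by simp
  have mono: "blo d N c (Suc i) (idx k - 1) + blen d N c (Suc i) (idx k - 1) \<le> blo d N c i (idx k - 1) + blen d N c i (idx k - 1)"
    by (rule blo_blen_mono)
  show ?case
  proof (cases "idx k - 1 = i mod d")
    case False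
    then show ?thesis using IH by simp
  next
    case True
    have ik: "idx k = Suc (i mod d)" using True idx_facts(1)[OF bij, of k] by simp
    have cond: "if odd (c div 2^i) then sp d N c i \<le> y$k else y$k < sp d N c i"
      using y iT ik by (auto simp: Aset_def)
    show ?thesis
    proof (cases "odd (c div 2^i)")
      case True
      have lo: "blo d N c (Suc i) (idx k - 1) = sp d N c i" by (rule blo_odd[OF \<open>idx k - 1 = i mod d\<close> True])
      have top: "blo d N c (Suc i) (idx k - 1) + blen d N c (Suc i) (idx k - 1) = blo d N c i (idx k - 1) + blen d N c i (idx k - 1)"
        by (rule blo_odd_top[OF \<open>idx k - 1 = i mod d\<close> True cnt_pos[OF cN]])
      have "sp d N c i \<le> y$k" using cond True by simp
      then show ?thesis using lo top IH by linarith
    next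
      case False
      have ev: "blo d N c (Suc i) (idx k - 1) = blo d N c i (idx k - 1) \<and> blo d N c (Suc i) (idx k - 1) + blen d N c (Suc i) (idx k - 1) = sp d N c i"
        using blo_even[OF \<open>idx k - 1 = i mod d\<close>, of c N] False by simp
      have "y$k < sp d N c i" using cond False by simp
      then show ?thesis using ev IH by linarith
    qed
  qed
qed

lemma chain_mono:
  assumes "i \<le> T"
  shows "blo d N c i j \<le> blo d N c T j \<and> blo d N c T j + blen d N c T j \<le> blo d N c i j + blen d N c i j"
  using assms
proof (induction T)
  case 0
  then show ?case by simp
next
  case (Suc T)
  show ?case
  proof (cases "i = Suc T")
    case True
    then show ?thesis by simp
  next
    case False
    then have "i \<le> T" using Suc.prems by simp
    then show ?thesis using Suc.IH blo_mono[of d N c T j] blo_blen_mono[of d N c T j] by linarith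
  qed
qed

lemma A_open:
  fixes idx :: "'n::finite \<Rightarrow> nat"
  assumes bij: "bij_betw idx UNIV {1..d}"
    and y: "\<And>k. blo d N c T (idx k - 1) < y$k \<and> y$k < blo d N c T (idx k - 1) + blen d N c T (idx k - 1)"
  shows "y \<in> Aset d N T idx c"
proof -
  have "y \<in> cbox 0 1"
    unfolding mem_box_cart
  proof
    fix k
    show "0 $ k \<le> y $ k \<and> y $ k \<le> 1 $ k"
      using y[of k] chain_mono[of 0 T d N c "idx k - 1"] by auto
  qed
  moreover have "\<forall>i<T. \<forall>k. idx k = Suc (i mod d) \<longrightarrow>
      (if odd (c div 2^i) then sp d N c i \<le> y$k else y$k < sp d N c i)"
  proof (intro allI impI)
    fix i k assume iT: "i < T" and ik: "idx k = Suc (i mod d)"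
    have j: "idx k - 1 = i mod d" using ik by simp
    have ch: "blo d N c (Suc i) (idx k - 1) \<le> blo d N c T (idx k - 1) \<and>
       blo d N c T (idx k - 1) + blen d N c T (idx k - 1) \<le> blo d N c (Suc i) (idx k - 1) + blen d N c (Suc i) (idx k - 1)"
      using chain_mono[of "Suc i" T d N c "idx k - 1"] iT by simp
    show "if odd (c div 2^i) then sp d N c i \<le> y$k else y$k < sp d N c i"
    proof (cases "odd (c div 2^i)")
      case True
      then show ?thesis using blo_odd[OF j True, of N] ch y[of k] by simp
    next
      case False
      then show ?thesis using blo_even[OF j, of c N] False ch y[of k] by simp
    qed
  qed
  ultimately show ?thesis by (simp add: Aset_def)
qed

lemma Aset_sets: "Aset d N T idx c \<in> sets borel"
proof -
  have "Aset d N T idx c = {y \<in> space borel. y \<in> cbox 0 1 \<and> (\<forall>i<T. \<forall>k. idx k = Suc (i mod d) \<longrightarrow>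
      (if odd (c div 2^i) then sp d N c i \<le> y$k else y$k < sp d N c i))}"
    by (simp add: Aset_def)
  also have "\<dots> \<in> sets borel"
    by measurable
  finally show ?thesis .
qed

lemma Aset_sub: "Aset d N T idx c \<subseteq> cbox 0 1"
  by (auto simp: Aset_def)

lemma Aset_fin: "emeasure lborel (Aset d N T idx c) < \<infinity>"
  by (rule le_less_trans[OF emeasure_mono[OF Aset_sub] emeasure_lborel_cbox_finite]) simp

lemma Aset_measure:
  fixes idx :: "'n::finite \<Rightarrow> nat"
  assumes bij: "bij_betw idx UNIV {1..d}" and "d > 0" and cN: "c < N" and "N \<le> 2^T"
  shows "measure lborel (Aset d N T idx c) = 1 / N"
proof -
  define lv :: "real^'n" where "lv = (\<chi> k. blo d N c T (idx k - 1))"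
  define uv :: "real^'n" where "uv = (\<chi> k. blo d N c T (idx k - 1) + blen d N c T (idx k - 1))"
  have sub1: "box lv uv \<subseteq> Aset d N T idx c"
    using A_open[OF bij] by (auto simp: lv_def uv_def mem_box_cart)
  have sub2: "Aset d N T idx c \<subseteq> cbox lv uv"
    using A_closed[OF bij, of _ N T c T, OF _ _ cN] by (auto simp: lv_def uv_def mem_box_cart)
  have le: "lv \<le> uv" using blen_nonneg by (simp add: lv_def uv_def less_eq_vec_def)
  have ne: "cbox lv uv \<noteq> {}" using le by (auto simp: interval_cbox_cart[symmetric])
  have bj: "bij_betw (\<lambda>k. idx k - 1) UNIV {..<d}"
  proof -
    have "bij_betw (\<lambda>x. x - 1) {1..d} {..<d}"
      by (rule bij_betwI[where g = "\<lambda>x. x + 1"]) auto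
    then show ?thesis using bij_betw_trans[OF bij] by (simp add: comp_def)
  qed
  have "measure lborel (cbox lv uv) = (\<Prod>k\<in>UNIV. uv$k - lv$k)"
    using content_cbox_cart[OF ne] by simp
  also have "\<dots> = (\<Prod>k\<in>UNIV. blen d N c T (idx k - 1))"
    by (simp add: lv_def uv_def)
  also have "\<dots> = (\<Prod>j<d. blen d N c T j)"
    using prod.reindex_bij_betw[OF bj, of "blen d N c T"] by simp
  also have "\<dots> = cnt N T c / N"
    using blen_prod[OF \<open>d > 0\<close>] assms by simp
  also have "\<dots> = 1 / N" using cnt_one[OF \<open>c < N\<close> \<open>N \<le> 2^T\<close>] by simp
  finally have mc: "measure lborel (cbox lv uv) = 1 / N" .
  have mb: "measure lborel (box lv uv) = measure lborel (cbox lv uv)"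
    by (simp add: measure_lborel_box_eq measure_lborel_cbox_eq)
  have "measure lborel (box lv uv) \<le> measure lborel (Aset d N T idx c)"
    by (rule measure_mono_fmeasurable[OF sub1]) (auto intro!: fmeasurableI Aset_fin simp: Aset_sets)
  moreover have "measure lborel (Aset d N T idx c) \<le> measure lborel (cbox lv uv)"
    by (rule measure_mono_fmeasurable[OF sub2]) (auto simp: Aset_sets)
  ultimately show ?thesis using mb mc by simp
qed

definition Kc :: "nat \<Rightarrow> nat \<Rightarrow> nat \<Rightarrow> nat" where
  "Kc d j i = (i + d - 1 - j) div d"

definition sv :: "nat \<Rightarrow> nat \<Rightarrow> nat \<Rightarrow> real" where
  "sv d j i = 1 / 2 ^ Kc d j i"

definition ev :: "nat \<Rightarrow> nat \<Rightarrow> nat \<Rightarrow> nat \<Rightarrow> real" where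
  "ev d c j i = (\<Sum>k<Kc d j i. real (c div 2^(d*k+j) mod 2) / 2^(k+1))"

definition Pv :: "nat \<Rightarrow> nat \<Rightarrow> nat \<Rightarrow> real" where
  "Pv d j i = 2^(d * Kc d j i + j) / 2^d"

lemma Kc_form:
  assumes "j < d" "r < d"
  shows "Kc d j (d*q + r) = q + (if j < r then 1 else 0)"
proof -
  have dp: "d > 0" using assms by simp
  have e: "d*q + r + d - 1 - j = (r + d - 1 - j) + q * d" using assms by (simp add: algebra_simps)
  have x: "(r + d - 1 - j) div d = (if j < r then 1 else 0)"
  proof (cases "j < r")
    case True
    have "(r + d - 1 - j) div d = 1"
      by (rule div_nat_eqI) (use True assms in auto)
    then show ?thesis using True by simp
  next
    case False
    have "(r + d - 1 - j) div d = 0"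
      by (rule div_nat_eqI) (use False assms in auto)
    then show ?thesis using False by simp
  qed
  show ?thesis unfolding Kc_def e using dp x by simp
qed

lemma Kc_step:
  assumes "j < d"
  shows "Kc d j (Suc i) = Kc d j i + (if i mod d = j then 1 else 0)"
proof -
  have dp: "d > 0" using assms by simp
  define q where "q = i div d"
  define r where "r = i mod d"
  have i: "i = d*q + r" unfolding q_def r_def by simp
  have rd: "r < d" unfolding r_def using dp by simp
  have K1: "Kc d j i = q + (if j < r then 1 else 0)" unfolding i by (rule Kc_form[OF assms rd])
  show ?thesis
  proof (cases "r + 1 < d")
    case True
    have "Suc i = d*q + (r+1)" using i by simp
    then have "Kc d j (Suc i) = q + (if j < r+1 then 1 else 0)" using Kc_form[OF assms True] by simp
    then show ?thesis using K1 r_def by auto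
  next
    case False
    then have rr: "r + 1 = d" using rd by simp
    have "Suc i = d*(q+1) + 0" using i rr by simp
    then have "Kc d j (Suc i) = q + 1" using Kc_form[OF assms, of 0 "q+1"] dp by simp
    then show ?thesis using K1 r_def rr assms by auto
  qed
qed

lemma Kc_at:
  assumes "j < d" "i mod d = j"
  shows "d * Kc d j i + j = i"
proof -
  have dp: "d > 0" using assms by simp
  have i: "i = d*(i div d) + j" using div_mult_mod_eq[of i d] assms(2) mult.commute[of d "i div d"] by linarith
  have "Kc d j i = i div d" using Kc_form[OF assms(1) assms(1), of "i div d"] i by simp
  then show ?thesis using i by simp
qed

lemma Kc_0: "j < d \<Longrightarrow> Kc d j 0 = 0"
  unfolding Kc_def by simp

lemma ev_step:
  assumes "j < d"
  shows "ev d c j (Suc i) = ev d c j i + (if i mod d = j then real (c div 2^i mod 2) / 2^(Kc d j i + 1) else 0)"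
proof (cases "i mod d = j")
  case True
  have "d * Kc d j i + j = i" by (rule Kc_at[OF assms True])
  then show ?thesis unfolding ev_def using Kc_step[OF assms, of i] True by simp
next
  case False
  then show ?thesis unfolding ev_def using Kc_step[OF assms, of i] by simp
qed

lemma step_core:
  fixes l s X nr n'r :: real
  assumes F: "\<bar>l - s\<bar> \<le> X/2" and s: "s \<ge> 0" and X: "X \<ge> 0" and n8: "nr \<ge> 8" and n'0: "n'r \<ge> 0"
    and nn: "\<bar>2 * n'r - nr\<bar> \<le> 1" and sn: "s / (2*nr) \<le> 4/7 * X"
  shows "\<bar>l * (n'r/nr) - s/2\<bar> \<le> 6/7 * X"
proof -
  define q where "q = n'r / nr"
  have np: "nr > 0" using n8 by simp
  have q0: "q \<ge> 0" unfolding q_def using n'0 np by simp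
  have "q - 1/2 = (2 * n'r - nr) / (2 * nr)" unfolding q_def using np by (simp add: field_simps)
  then have qa: "\<bar>q - 1/2\<bar> \<le> 1 / (2*nr)" using nn np by (simp add: abs_div divide_right_mono)
  have "1 / (2*nr) \<le> 1/16" using n8 by (simp add: field_simps)
  then have q1: "q \<le> 9/16" using qa by linarith
  have "l * q - s/2 = (l - s) * q + s * (q - 1/2)" by (simp add: algebra_simps)
  then have "\<bar>l * q - s/2\<bar> \<le> \<bar>l - s\<bar> * q + s * \<bar>q - 1/2\<bar>"
    using q0 s by (simp add: abs_mult) (metis abs_mult abs_of_nonneg abs_triangle_ineq)
  also have "\<dots> \<le> (X/2) * (9/16) + s * (1/(2*nr))"
    by (intro add_mono mult_mono mult_left_mono F q1 qa s) (use X q0 in auto)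
  also have "s * (1/(2*nr)) = s / (2*nr)" by simp
  finally have "\<bar>l * q - s/2\<bar> \<le> (X/2) * (9/16) + 4/7 * X" using sn by linarith
  then show ?thesis unfolding q_def using X by linarith
qed


lemma two_child:
  fixes n :: nat
  shows "\<bar>2 * real ((n+1) div 2) - real n\<bar> \<le> 1" "\<bar>2 * real (n div 2) - real n\<bar> \<le> 1"
proof -
  have a: "2 * ((n+1) div 2) \<le> n + 1 \<and> n \<le> 2 * ((n+1) div 2)" by presburger
  have b: "2 * (n div 2) \<le> n \<and> n \<le> 2 * (n div 2) + 1" by presburger
  show "\<bar>2 * real ((n+1) div 2) - real n\<bar> \<le> 1"
  proof -
    have "2 * real ((n+1) div 2) \<le> real n + 1" "real n \<le> 2 * real ((n+1) div 2)"
      using a by (simp_all add: of_nat_le_iff[symmetric] del: of_nat_le_iff) 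
    then show ?thesis by linarith
  qed
  show "\<bar>2 * real (n div 2) - real n\<bar> \<le> 1"
  proof -
    have "2 * real (n div 2) \<le> real n" "real n \<le> 2 * real (n div 2) + 1"
      using b by (simp_all add: of_nat_le_iff[symmetric] del: of_nat_le_iff)
    then show ?thesis by linarith
  qed
qed

lemma inv:
  assumes d2: "2 \<le> d" and jd: "j < d" and cN: "c < N"
  shows "(\<forall>i'<i. i' mod d = j \<longrightarrow> 8 * 2^i' \<le> N) \<Longrightarrow>
    \<bar>blen d N c i j - sv d j i\<bar> \<le> 2 * sv d j i * Pv d j i / N \<and>
    \<bar>blo d N c i j - ev d c j i\<bar> \<le> 4 * sv d j i * Pv d j i / N"
proof (induction i)
  case 0
  have "Kc d j 0 = 0" using jd by (rule Kc_0)
  then show ?case by (simp add: sv_def ev_def Pv_def)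
next
  case (Suc i)
  have hyp: "\<forall>i'<i. i' mod d = j \<longrightarrow> 8 * 2^i' \<le> N" using Suc.prems by simp
  note IH = Suc.IH[OF hyp]
  show ?case
  proof (cases "i mod d = j")
    case False
    have K: "Kc d j (Suc i) = Kc d j i" using Kc_step[OF jd, of i] False by simp
    have E: "ev d c j (Suc i) = ev d c j i" using ev_step[OF jd, of c i] False by simp
    have "j \<noteq> i mod d" using False by simp
    then show ?thesis using IH K E by (simp add: sv_def Pv_def)
  next
    case True
    define K where "K = Kc d j i"
    define s where "s = sv d j i"
    define n where "n = cnt N i c"
    define n' where "n' = cnt N (Suc i) c"
    define n0 where "n0 = cnt N (Suc i) (c mod 2^i)"
    define X where "X = s * 2^i / N"
    have Ki: "d * K + j = i" unfolding K_def by (rule Kc_at[OF jd True])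
    have KS: "Kc d j (Suc i) = K + 1" using Kc_step[OF jd, of i] True K_def by simp
    have s_def': "s = 1/2^K" by (simp add: s_def sv_def K_def)
    have s0: "s \<ge> 0" by (simp add: s_def')
    have sS: "sv d j (Suc i) = s/2" using KS by (simp add: sv_def s_def')
    have Pi: "Pv d j i = 2^i / 2^d" using Ki by (simp add: Pv_def K_def)
    have eK: "d * (K+1) + j = i + d" using Ki by simp
    have PS: "Pv d j (Suc i) = 2^i" unfolding Pv_def KS eK by (simp add: power_add)
    have N8: "8 * 2^i \<le> N" using Suc.prems True by simp
    have Npos: "N > 0" using cN by simp
    have X0: "X \<ge> 0" unfolding X_def using s0 by simp
    have low: "N < (n+1)*2^i" unfolding n_def by (rule cnt_lower)
    have "8 * 2^i < (n+1) * 2^i" using low N8 by linarith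
    then have n8: "n \<ge> 8" by simp
    have "8 * N < 8 * ((n+1)*2^i)" using low by simp
    then have "7 * N < 8 * n * 2^i" using N8 by (simp add: algebra_simps)
    then have "7 * N \<le> 8 * n * 2^i" by simp
    then have "real (7 * N) \<le> real (8 * n * 2^i)" by (simp only: of_nat_le_iff)
    then have r7: "7 * real N \<le> 8 * real n * 2^i" by simp
    have npos: "real n > 0" using n8 by simp
    have "s / (2 * real n) = (s * (7 * real N)) / (14 * real n * real N)" using npos Npos by (simp add: field_simps)
    also have "\<dots> \<le> (s * (8 * real n * 2^i)) / (14 * real n * real N)"
      by (intro divide_right_mono mult_left_mono r7 s0) (use npos Npos in simp)
    also have "\<dots> = 4/7 * X" unfolding X_def using npos Npos by (simp add: field_simps)
    finally have sn: "s / (2 * real n) \<le> 4/7 * X" .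
    have d4: "(4::real) \<le> 2^d"
    proof -
      have "(2::real)^2 \<le> 2^d" by (rule power_increasing[OF d2]) simp
      then show ?thesis by simp
    qed
    have "2 * s * Pv d j i / N = (2 * X) / 2^d" unfolding Pi X_def by (simp add: field_simps)
    also have "\<dots> \<le> (2 * X) / 4" by (rule divide_left_mono[OF d4]) (use X0 in simp_all)
    finally have Fb: "\<bar>blen d N c i j - s\<bar> \<le> X/2" using IH s_def by simp
    have "4 * s * Pv d j i / N = (4 * X) / 2^d" unfolding Pi X_def by (simp add: field_simps)
    also have "\<dots> \<le> (4 * X) / 4" by (rule divide_left_mono[OF d4]) (use X0 in simp_all)
    finally have Eb: "\<bar>blo d N c i j - ev d c j i\<bar> \<le> X" using IH s_def by simp
    have n0e: "n0 = (n+1) div 2" unfolding n0_def n_def by (rule cnt_Suc_mod)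
    have n'e: "n' = (if odd (c div 2^i) then n div 2 else (n+1) div 2)" unfolding n'_def n_def by (rule cnt_Suc)
    have nn': "\<bar>2 * real n' - real n\<bar> \<le> 1" using n'e two_child[of n] by auto
    have nn0: "\<bar>2 * real n0 - real n\<bar> \<le> 1" using n0e two_child[of n] by auto
    have core': "\<bar>blen d N c i j * (real n'/real n) - s/2\<bar> \<le> 6/7 * X"
      by (rule step_core[OF Fb s0 X0 _ _ nn' sn]) (use n8 in simp_all)
    have core0: "\<bar>blen d N c i j * (real n0/real n) - s/2\<bar> \<le> 6/7 * X"
      by (rule step_core[OF Fb s0 X0 _ _ nn0 sn]) (use n8 in simp_all)
    have lS: "blen d N c (Suc i) j = blen d N c i j * (real n'/real n)"
      using True by (simp add: n'_def n_def)
    have RS1: "2 * sv d j (Suc i) * Pv d j (Suc i) / N = X" unfolding sS PS X_def by simp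
    have RS2: "4 * sv d j (Suc i) * Pv d j (Suc i) / N = 2 * X" unfolding sS PS X_def by simp
    have part1: "\<bar>blen d N c (Suc i) j - sv d j (Suc i)\<bar> \<le> 2 * sv d j (Suc i) * Pv d j (Suc i) / N"
    proof -
      have "\<bar>blen d N c (Suc i) j - sv d j (Suc i)\<bar> \<le> X" unfolding lS sS using core' X0 by linarith
      then show ?thesis using RS1 by simp
    qed
    have part2: "\<bar>blo d N c (Suc i) j - ev d c j (Suc i)\<bar> \<le> 4 * sv d j (Suc i) * Pv d j (Suc i) / N"
    proof (cases "odd (c div 2^i)")
      case od: True
      have b1: "c div 2^i mod 2 = 1" using od by (simp add: odd_iff_mod_2_eq_one)
      have eS: "ev d c j (Suc i) = ev d c j i + s/2"
        using ev_step[OF jd, of c i] True b1 by (simp add: s_def' K_def)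
      have bS: "blo d N c (Suc i) j = blo d N c i j + blen d N c i j * (real n0/real n)"
        using True od by (simp add: n0_def n_def)
      have "\<bar>blo d N c (Suc i) j - ev d c j (Suc i)\<bar> \<le> 2 * X" unfolding eS bS using core0 Eb by linarith
      then show ?thesis using RS2 by simp
    next
      case ev: False
      have b0: "c div 2^i mod 2 = 0" using ev by (simp add: even_iff_mod_2_eq_zero)
      have eS: "ev d c j (Suc i) = ev d c j i"
        using ev_step[OF jd, of c i] True b0 by simp
      have bS: "blo d N c (Suc i) j = blo d N c i j"
        using True ev by simp
      have "\<bar>blo d N c (Suc i) j - ev d c j (Suc i)\<bar> \<le> 2 * X" unfolding eS bS using Eb X0 by linarith
      then show ?thesis using RS2 by simp
    qed
    show ?thesis using part1 part2 by simp
  qed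
qed

lemma bit_digit:
  fixes a :: nat
  assumes "j < d"
  shows "(a mod 2^d) div 2^j mod 2 = a div 2^j mod 2"
proof -
  have pd: "(2::nat)^d = 2^j * 2^(d-j)" using assms by (simp add: power_add[symmetric])
  have "a mod 2^d = 2^j * (a div 2^j mod 2^(d-j)) + a mod 2^j"
    unfolding pd by (rule mod_mult2_eq)
  then have "(a mod 2^d) div 2^j = a div 2^j mod 2^(d-j)" by simp
  moreover have "(2::nat) dvd 2^(d-j)" using assms by simp
  ultimately show ?thesis by (simp add: mod_mod_cancel)
qed

lemma coord_eq:
  assumes "j < d"
  shows "dyadic_coord d (Suc j) (c+1) = (\<Sum>k. real (c div 2^(d*k+j) mod 2) / 2^(k+1))"
proof -
  have "\<And>k. bitj (Suc j) (digit (2^d) k c) = c div 2^(d*k+j) mod 2"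
  proof -
    fix k
    have "bitj (Suc j) (digit (2^d) k c) = (c div 2^(d*k) mod 2^d) div 2^j mod 2"
      by (simp add: bitj_def digit_def power_mult)
    also have "\<dots> = c div 2^(d*k) div 2^j mod 2" by (rule bit_digit[OF assms])
    also have "\<dots> = c div 2^(d*k+j) mod 2" by (simp add: div_mult2_eq power_add)
    finally show "bitj (Suc j) (digit (2^d) k c) = c div 2^(d*k+j) mod 2" .
  qed
  then show ?thesis by (simp add: dyadic_coord_def)
qed

lemma coord_bounds:
  assumes "j < d"
  shows "ev d c j i \<le> dyadic_coord d (Suc j) (c+1) \<and> dyadic_coord d (Suc j) (c+1) \<le> ev d c j i + sv d j i"
proof -
  define f where "f = (\<lambda>k. real (c div 2^(d*k+j) mod 2) / 2^(k+1))"
  define K where "K = Kc d j i"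
  have f0: "\<And>k. 0 \<le> f k" by (simp add: f_def)
  have f1: "\<And>k. f k \<le> (1/2)^(k+1)"
  proof -
    fix k
    have "real (c div 2^(d*k+j) mod 2) \<le> 1" by simp
    then show "f k \<le> (1/2)^(k+1)" unfolding f_def by (simp add: power_one_over divide_right_mono)
  qed
  have ee: "(\<lambda>k. (1/2::real)^(k+1)) = (\<lambda>k. (1/2) * (1/2)^k)"
    by (rule ext) (simp only: Suc_eq_plus1[symmetric] power_Suc)
  have "summable (\<lambda>k. (1/2::real) * (1/2)^k)" by (intro summable_mult summable_geometric) simp
  then have sg: "summable (\<lambda>k. (1/2::real)^(k+1))" unfolding ee .
  have sf: "summable f"
    by (rule summable_comparison_test[of _ "\<lambda>k. (1/2::real)^(k+1)"]) (use f0 f1 sg in auto)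
  have split: "suminf f = (\<Sum>n. f (n + K)) + (\<Sum>i<K. f i)" by (rule suminf_split_initial_segment[OF sf])
  have sfK: "summable (\<lambda>n. f (n + K))" using sf by (simp add: summable_iff_shift)
  have sgK: "summable (\<lambda>n. (1/2::real)^(n + K + 1))" using sg by (simp add: summable_iff_shift[of "\<lambda>k. (1/2::real)^(k+1)" K])
  have t0: "0 \<le> (\<Sum>n. f (n + K))" by (rule suminf_nonneg[OF sfK]) (simp add: f0)
  have "(\<Sum>n. f (n + K)) \<le> (\<Sum>n. (1/2::real)^(n + K + 1))"
    by (rule suminf_le) (use f1 sfK sgK in auto)
  also have "(\<Sum>n. (1/2::real)^(n + K + 1)) = 1 / 2^K"
  proof -
    have ee2: "(\<lambda>n. (1/2::real)^(n+K+1)) = (\<lambda>n. (1/2)^(K+1) * (1/2)^n)"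
      by (rule ext) (subst power_add[symmetric], simp add: add.commute)
    have g: "(\<Sum>n. (1/2::real)^n) = 2" using suminf_geometric[of "1/2::real"] by simp
    show ?thesis unfolding ee2 suminf_mult[OF summable_geometric[of "1/2::real"], simplified] g
      by (simp add: power_one_over)
  qed
  finally have t1: "(\<Sum>n. f (n + K)) \<le> 1 / 2^K" .
  have e: "ev d c j i = (\<Sum>i<K. f i)" by (simp add: ev_def f_def K_def)
  have x: "dyadic_coord d (Suc j) (c+1) = suminf f" using coord_eq[OF assms] by (simp add: f_def)
  show ?thesis using split t0 t1 unfolding x e by (simp add: sv_def K_def)
qed

lemma ineq_core:
  fixes w Q :: real
  assumes "w > 0" "w < 4" "0 \<le> Q" "Q \<le> 1/8" "Q * w^d \<le> 1/2" "2 \<le> d"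
  shows "w + 6 * w * Q \<le> 6"
proof (cases "w \<le> 17/5")
  case True
  have "6 * w * Q \<le> 6 * w * (1/8)" using assms by (intro mult_left_mono) auto
  then show ?thesis using True by linarith
next
  case False
  have w1: "1 \<le> w" using False by simp
  have "w^2 \<le> w^d" by (rule power_increasing[OF assms(6) w1])
  then have "Q * w^2 \<le> Q * w^d" using assms by (intro mult_left_mono) auto
  then have q2: "Q * w^2 \<le> 1/2" using assms by linarith
  have "6 * w * Q = 6 * (Q * w^2) / w" using assms by (simp add: power2_eq_square field_simps)
  also have "\<dots> \<le> 6 * (1/2) / w" using q2 assms by (intro divide_right_mono) auto
  also have "\<dots> \<le> 6 * (1/2) / (17/5)" using False by (intro divide_left_mono) auto
  also have "6 * (1/2) / (17/5) \<le> (1::real)" by simp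
  finally show ?thesis using assms by linarith
qed

lemma final_ineq:
  fixes d j q N :: nat
  assumes d2: "2 \<le> d" and jd: "j < d" and lo: "8 * 2^(d*q+j) \<le> N" and hi: "N < 8 * 2^(d*(q+1)+j)"
  shows "1/2^(q+1) + 6 * (1/2^(q+1)) * 2^(d*q+j) / N \<le> 6 * real N powr (- 1 / real d)"
proof -
  define s :: real where "s = 1/2^(q+1)"
  define u where "u = real N powr (1 / real d)"
  define w where "w = s * u"
  define Q :: real where "Q = 2^(d*q+j) / N"
  have "(0::nat) < 8*2^(d*q+j)" by simp
  then have "0 < N" using lo by linarith
  then have Np: "real N > 0" by simp
  have dp: "real d > 0" using d2 by simp
  have up: "u > 0" unfolding u_def using Np by simp
  have ud: "u^d = real N"
  proof -
    have "u^d = u powr (real d)" using up by (simp add: powr_realpow)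
    also have "\<dots> = real N" unfolding u_def using dp Np by (simp add: powr_powr)
    finally show ?thesis .
  qed
  have neg: "real N powr (- 1 / real d) = 1 / u"
    unfolding u_def by (simp add: powr_minus[symmetric] divide_inverse)
  have sp: "s > 0" by (simp add: s_def)
  have wp: "w > 0" using sp up by (simp add: w_def)
  have sd: "s^d = 1 / 2^(d*(q+1))" by (simp add: s_def power_mult[symmetric] power_one_over mult.commute power_add)
  have wd: "w^d = real N / 2^(d*(q+1))" unfolding w_def by (simp add: power_mult_distrib sd ud)
  have "real N < real (8 * 2^(d*(q+1)+j))" using hi by (simp only: of_nat_less_iff)
  then have "real N < 8 * 2^(d*(q+1)+j)" by simp
  then have "w^d < 8 * 2^j" unfolding wd by (simp add: divide_less_eq power_add mult_ac)
  also have "(8::real) * 2^j \<le> 4^d"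
  proof -
    have "(8::real) * 2^j = 2^(j+3)" by (simp add: power_add)
    also have "\<dots> \<le> 2^(2*d)" by (rule power_increasing) (use jd d2 in auto)
    also have "\<dots> = 4^d" by (simp add: power_mult)
    finally show ?thesis .
  qed
  finally have w4: "w < 4" by (rule power_less_imp_less_base) simp
  have Q0: "0 \<le> Q" by (simp add: Q_def)
  have "real (8 * 2^(d*q+j)) \<le> real N" using lo by (simp only: of_nat_le_iff)
  then have "8 * 2^(d*q+j) \<le> real N" by simp
  then have Q8: "Q \<le> 1/8" unfolding Q_def using Np by (simp add: divide_le_eq)
  have "Q * w^d = 2^(d*q+j) / 2^(d*(q+1))" unfolding Q_def wd using Np by simp
  also have "\<dots> = 2^j / 2^d" by (simp add: power_add algebra_simps)
  also have "\<dots> \<le> 1/2"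
  proof -
    have "(2::real)^(j+1) \<le> 2^d" by (rule power_increasing) (use jd in auto)
    then show ?thesis by (simp add: divide_le_eq)
  qed
  finally have Qw: "Q * w^d \<le> 1/2" .
  have core: "w + 6 * w * Q \<le> 6" by (rule ineq_core[OF wp w4 Q0 Q8 Qw d2])
  have "s + 6 * s * Q = (w + 6 * w * Q) / u" unfolding w_def using up by (simp add: field_simps)
  also have "\<dots> \<le> 6 / u" using core up by (simp add: divide_right_mono)
  finally show ?thesis unfolding neg s_def Q_def by simp
qed

lemma coord_bound:
  fixes idx :: "'n::finite \<Rightarrow> nat"
  assumes bij: "bij_betw idx UNIV {1..d}" and d2: "2 \<le> d" and cN: "c < N" and NT: "N \<le> 2^T"
    and y: "y \<in> Aset d N T idx c"
  shows "\<bar>y$k - dyadic_point d idx (c+1) $ k\<bar> \<le> 6 * real N powr (- 1 / real d)"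
proof -
  define j where "j = idx k - 1"
  have jd: "j < d" and ik: "idx k = Suc j" using idx_facts(1,2)[OF bij, where k=k] by (auto simp: j_def)
  define x where "x = dyadic_coord d (Suc j) (c+1)"
  have xe: "dyadic_point d idx (c+1) $ k = x" by (simp add: dyadic_point_def x_def ik)
  have Np: "real N > 0" using cN by simp
  have y01: "0 \<le> y$k \<and> y$k \<le> 1" using y by (auto simp: Aset_def mem_box_cart)
  have x01: "0 \<le> x \<and> x \<le> 1" using coord_bounds[OF jd, of c 0] Kc_0[OF jd]
    by (simp add: x_def ev_def sv_def)
  show ?thesis
  proof (cases "N < 8 * 2^j")
    case True
    have "real N \<le> 6^d"
    proof -
      have "8 * 2^j \<le> (4::nat) * 2^d"
      proof -
        have "(2::nat)^(j+3) \<le> 2^(d+2)" by (rule power_increasing) (use jd in auto)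
        then show ?thesis by (simp add: power_add)
      qed
      also have "(4::nat) * 2^d \<le> 6^d"
      proof -
        have "(4::nat) \<le> 3^d"
        proof -
          have "(3::nat)^2 \<le> 3^d" by (rule power_increasing[OF d2]) simp
          then show ?thesis by simp
        qed
        then have "(4::nat) * 2^d \<le> 3^d * 2^d" by simp
        also have "\<dots> = 6^d" by (simp add: power_mult_distrib[symmetric])
        finally show ?thesis .
      qed
      finally have "N \<le> 6^d" using True by linarith
      then have "real N \<le> real (6^d)" by (simp only: of_nat_le_iff)
      then show ?thesis by simp
    qed
    then have "real N powr (1 / real d) \<le> ((6::real)^d) powr (1 / real d)"
      by (intro powr_mono2) auto
    also have "((6::real)^d) powr (1 / real d) = 6"
    proof -
      have "(6::real)^d = 6 powr (real d)" by (simp add: powr_realpow)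
      then show ?thesis using d2 by (simp add: powr_powr)
    qed
    finally have u6: "real N powr (1 / real d) \<le> 6" .
    have "real N powr (- 1 / real d) = 1 / real N powr (1 / real d)"
      by (simp add: powr_minus[symmetric] divide_inverse)
    moreover have "real N powr (1 / real d) > 0" using Np by simp
    moreover have "1 \<le> 6 / real N powr (1 / real d)"
      using u6 \<open>real N powr (1 / real d) > 0\<close> by (simp add: le_divide_eq)
    ultimately have "1 \<le> 6 * real N powr (- 1 / real d)" by simp
    then show ?thesis unfolding xe using y01 x01 by linarith
  next
    case False
    define P where "P = (\<lambda>q. 8 * 2^(d*q+j) \<le> N)"
    have P0: "P 0" unfolding P_def using False by simp
    have Pb: "\<forall>q. P q \<longrightarrow> q \<le> N"
    proof (intro allI impI)
      fix q assume "P q"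
      have "q < 2^q" by simp
      also have "(2::nat)^q \<le> 2^(d*q+j)"
      proof (rule power_increasing)
        have "1*q \<le> d*q" by (rule mult_le_mono1) (use d2 in simp)
        then show "q \<le> d*q+j" by linarith
      qed simp
      also have "\<dots> \<le> N" using \<open>P q\<close> unfolding P_def by linarith
      finally show "q \<le> N" by simp
    qed
    obtain q where Pq: "P q" and qmax: "\<forall>y. P y \<longrightarrow> y \<le> q"
      using Nat.ex_has_greatest_nat[OF P0 Pb] by blast
    have lo: "8 * 2^(d*q+j) \<le> N" using Pq by (simp add: P_def)
    have "\<not> P (q+1)" using qmax by fastforce
    then have hi: "N < 8 * 2^(d*(q+1)+j)" unfolding P_def by (simp only: not_le)
    define t where "t = Suc (d*q+j)"
    have "(0::nat) < 2^(d*q+j)" by simp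
    then have "(2::nat)^(d*q+j) < 2^T" using lo NT by linarith
    then have tT: "t \<le> T" unfolding t_def using power_less_imp_less_exp[of 2] by fastforce
    have hyp: "\<forall>i'<t. i' mod d = j \<longrightarrow> 8 * 2^i' \<le> N"
    proof (intro allI impI)
      fix i' assume "i' < t" "i' mod d = j"
      then have "(2::nat)^i' \<le> 2^(d*q+j)" unfolding t_def by (intro power_increasing) auto
      then show "8 * 2^i' \<le> N" using lo by linarith
    qed
    note I = inv[OF d2 jd cN hyp]
    have Kq: "Kc d j (d*q+j) = q" using Kc_form[OF jd jd, of q] by simp
    have Kt: "Kc d j t = q + 1" unfolding t_def using Kc_step[OF jd, of "d*q+j"] Kq jd by simp
    have st: "sv d j t = 1/2^(q+1)" by (simp add: sv_def Kt)
    have eK: "d*(q+1)+j = (d*q+j) + d" by simp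
    have Pt: "Pv d j t = 2^(d*q+j)" unfolding Pv_def Kt eK by (simp add: power_add)
    have yb: "blo d N c t j \<le> y$k \<and> y$k \<le> blo d N c t j + blen d N c t j"
      using A_closed[OF bij y tT cN, of k] by (simp add: j_def)
    have xb: "ev d c j t \<le> x \<and> x \<le> ev d c j t + sv d j t"
      unfolding x_def by (rule coord_bounds[OF jd])
    define sx where "sx = sv d j t"
    define Z where "Z = sx * Pv d j t / N"
    have Z2: "2 * sx * Pv d j t / N = 2 * Z" unfolding Z_def by simp
    have Z4: "4 * sx * Pv d j t / N = 4 * Z" unfolding Z_def by simp
    have Fb: "\<bar>blen d N c t j - sx\<bar> \<le> 2 * Z" using I Z2 by (simp add: sx_def)
    have Eb: "\<bar>blo d N c t j - ev d c j t\<bar> \<le> 4 * Z" using I Z4 by (simp add: sx_def)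
    have "\<bar>y$k - x\<bar> \<le> sx + 6 * Z" using yb xb Fb Eb unfolding sx_def by linarith
    also have "sx + 6 * Z = 1/2^(q+1) + 6 * (1/2^(q+1)) * 2^(d*q+j) / N"
      unfolding Z_def sx_def st Pt by simp
    also have "\<dots> \<le> 6 * real N powr (- 1 / real d)" by (rule final_ineq[OF d2 jd lo hi])
    finally show ?thesis unfolding xe .
  qed
qed

lemma dist_bound:
  fixes idx :: "'n::finite \<Rightarrow> nat"
  assumes bij: "bij_betw idx UNIV {1..d}" and d2: "2 \<le> d" and dc: "d = CARD('n)" and cN: "c < N" and NT: "N \<le> 2^T"
    and y: "y \<in> Aset d N T idx c"
  shows "y \<in> cball (dyadic_point d idx (c+1)) (6 * sqrt (real d) * real N powr (- 1 / real d))"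
proof -
  define r where "r = 6 * real N powr (- 1 / real d)"
  define x where "x = dyadic_point d idx (c+1)"
  have b: "\<And>k. \<bar>(x - y)$k\<bar> \<le> r" using coord_bound[OF bij d2 cN NT y] by (simp add: r_def x_def abs_minus_commute)
  have r0: "r \<ge> 0" by (simp add: r_def)
  have "(norm (x - y))^2 = (x - y) \<bullet> (x - y)" by (rule power2_norm_eq_inner)
  also have "\<dots> = (\<Sum>k\<in>UNIV. ((x - y)$k)^2)" by (simp add: inner_vec_def power2_eq_square)
  also have "\<dots> \<le> (\<Sum>k\<in>(UNIV::'n set). r^2)"
  proof (rule sum_mono)
    fix k :: 'n
    have "\<bar>(x - y)$k\<bar>^2 \<le> r^2" by (rule power_mono[OF b]) simp
    then show "((x - y)$k)^2 \<le> r^2" by simp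
  qed
  also have "\<dots> = (sqrt (real d) * r)^2" using dc by (simp add: power_mult_distrib)
  finally have "(norm (x - y))^2 \<le> (sqrt (real d) * r)^2" .
  then have "norm (x - y) \<le> sqrt (real d) * r"
    by (rule power2_le_imp_le) (use r0 in simp)
  then show ?thesis by (simp add: mem_cball dist_norm x_def r_def mult.assoc)
qed

lemma Aset_disj:
  fixes idx :: "'n::finite \<Rightarrow> nat"
  assumes bij: "bij_betw idx UNIV {1..d}" and dp: "d > 0" and cc: "c \<noteq> c'" and c1: "c < 2^T" and c2: "c' < 2^T"
  shows "Aset d N T idx c \<inter> Aset d N T idx c' = {}"
proof -
  define P where "P = (\<lambda>i. c mod 2^Suc i \<noteq> c' mod 2^Suc i)"
  have T0: "T > 0" using cc c1 c2 by (cases T) auto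
  have "P (T - 1)" unfolding P_def using T0 c1 c2 cc by simp
  then obtain i where Pi: "P i" and imin: "\<And>i'. i' < i \<Longrightarrow> \<not> P i'" and iT: "i \<le> T - 1"
    by (metis Least_le LeastI not_less_Least)
  have same: "c mod 2^i = c' mod 2^i"
  proof (cases i)
    case 0 then show ?thesis by simp
  next
    case (Suc i0)
    then show ?thesis using imin[of i0] unfolding P_def by simp
  qed
  have par: "odd (c div 2^i) \<noteq> odd (c' div 2^i)"
  proof
    assume eq: "odd (c div 2^i) = odd (c' div 2^i)"
    have "c mod 2^(Suc i) = c' mod 2^(Suc i)"
      unfolding mod_Suc_pow2[of c i] mod_Suc_pow2[of c' i] using eq same by simp
    then show False using Pi unfolding P_def by simp
  qed
  have spe: "sp d N c i = sp d N c' i" by (rule sp_dep[OF same])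
  obtain k where ik: "idx k = Suc (i mod d)" using idx_facts(3)[OF bij, of "i mod d"] dp by auto
  have iT': "i < T" using iT T0 by simp
  show ?thesis
  proof (rule ccontr)
    assume "Aset d N T idx c \<inter> Aset d N T idx c' \<noteq> {}"
    then obtain y where y1: "y \<in> Aset d N T idx c" and y2: "y \<in> Aset d N T idx c'" by blast
    have a1: "if odd (c div 2^i) then sp d N c i \<le> y$k else y$k < sp d N c i"
      using y1 iT' ik by (auto simp: Aset_def)
    have a2: "if odd (c' div 2^i) then sp d N c' i \<le> y$k else y$k < sp d N c' i"
      using y2 iT' ik by (auto simp: Aset_def)
    show False using a1 a2 par spe by (auto split: if_splits)
  qed
qed

theorem theorem1p2:
  fixes idx :: "'n::finite \<Rightarrow> nat" and d N :: nat
  assumes "d = CARD('n)" and "d \<ge> 2"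
    and "bij_betw idx UNIV {1..d}"
    and "N \<ge> 1"
  shows "\<exists>A :: nat \<Rightarrow> (real ^ 'n) set.
     (\<forall>n\<in>{1..N}. A n \<in> sets borel \<and> A n \<subseteq> cbox 0 1
        \<and> measure lborel (A n) = 1 / real N
        \<and> A n \<subseteq> cball (dyadic_point d idx n) (6 * sqrt (real d) * real N powr (- 1 / real d)))
   \<and> disjoint_family_on A {1..N}
   \<and> measure lborel (cbox 0 1 - (\<Union>n\<in>{1..N}. A n)) = 0"
proof -
  note dc = assms(1) and d2 = assms(2) and bij = assms(3) and N1 = assms(4)
  have dp: "d > 0" using d2 by simp
  define T where "T = N"
  have NT: "N \<le> 2^T" unfolding T_def using less_exp[of N] by simp
  define A where "A = (\<lambda>n. Aset d N T idx (n - 1))"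
  have P1: "\<forall>n\<in>{1..N}. A n \<in> sets borel \<and> A n \<subseteq> cbox 0 1
        \<and> measure lborel (A n) = 1 / real N
        \<and> A n \<subseteq> cball (dyadic_point d idx n) (6 * sqrt (real d) * real N powr (- 1 / real d))"
  proof
    fix n assume n: "n \<in> {1..N}"
    have cN: "n - 1 < N" using n by auto
    have nn: "n - 1 + 1 = n" using n by auto
    show "A n \<in> sets borel \<and> A n \<subseteq> cbox 0 1
        \<and> measure lborel (A n) = 1 / real N
        \<and> A n \<subseteq> cball (dyadic_point d idx n) (6 * sqrt (real d) * real N powr (- 1 / real d))"
    proof (intro conjI)
      show "A n \<in> sets borel" unfolding A_def by (rule Aset_sets)
      show "A n \<subseteq> cbox 0 1" unfolding A_def by (rule Aset_sub)
      show "measure lborel (A n) = 1 / real N" unfolding A_def by (rule Aset_measure[OF bij dp cN NT])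
      show "A n \<subseteq> cball (dyadic_point d idx n) (6 * sqrt (real d) * real N powr (- 1 / real d))"
      proof
        fix y assume "y \<in> A n"
        then have "y \<in> Aset d N T idx (n - 1)" by (simp add: A_def)
        from dist_bound[OF bij d2 dc cN NT this]
        show "y \<in> cball (dyadic_point d idx n) (6 * sqrt (real d) * real N powr (- 1 / real d))"
          by (simp only: nn)
      qed
    qed
  qed
  have P2: "disjoint_family_on A {1..N}"
    unfolding disjoint_family_on_def
  proof (intro ballI impI)
    fix m n assume m: "m \<in> {1..N}" and n: "n \<in> {1..N}" and mn: "m \<noteq> n"
    have "m - 1 \<noteq> n - 1" "m - 1 < 2^T" "n - 1 < 2^T" using m n mn NT by auto
    then show "A m \<inter> A n = {}" unfolding A_def by (rule Aset_disj[OF bij dp])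
  qed
  have U: "(\<Union>n\<in>{1..N}. A n) \<subseteq> cbox 0 1" using P1 by blast
  have Us: "(\<Union>n\<in>{1..N}. A n) \<in> sets lborel" using P1 by auto
  have m1: "measure lborel (cbox 0 1 :: (real^'n) set) = 1"
  proof -
    have "(0::real^'n) \<in> cbox 0 1" by (simp add: mem_box_cart)
    then have "cbox 0 1 \<noteq> ({} :: (real^'n) set)" by blast
    then show ?thesis using content_cbox_cart[of 0 1] by simp
  qed
  have mU: "measure lborel (\<Union>n\<in>{1..N}. A n) = (\<Sum>n\<in>{1..N}. measure lborel (A n))"
  proof (rule measure_finite_Union)
    show "finite {1..N}" by simp
    show "A ` {1..N} \<subseteq> sets lborel" using P1 by auto
    show "disjoint_family_on A {1..N}" by (rule P2)
    fix i assume "i \<in> {1..N}"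
    show "emeasure lborel (A i) \<noteq> \<infinity>" unfolding A_def using Aset_fin[of d N T idx "i - 1"] by simp
  qed
  also have "\<dots> = (\<Sum>n\<in>{1..N}. 1 / real N)" using P1 by simp
  also have "\<dots> = 1" using N1 by simp
  finally have mU1: "measure lborel (\<Union>n\<in>{1..N}. A n) = 1" .
  have "measure lborel (cbox 0 1 - (\<Union>n\<in>{1..N}. A n)) = measure lborel (cbox 0 1 :: (real^'n) set) - measure lborel (\<Union>n\<in>{1..N}. A n)"
  proof (rule measure_Diff)
    show "emeasure lborel (cbox 0 1 :: (real^'n) set) \<noteq> \<infinity>"
      using emeasure_lborel_cbox_finite[of "0::real^'n" 1] by simp
  qed (use U Us in auto)
  then have P3: "measure lborel (cbox 0 1 - (\<Union>n\<in>{1..N}. A n)) = 0" using m1 mU1 by simp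
  show ?thesis using P1 P2 P3 by blast
qed

end
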